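(* Let $p\in(0,1/2)$ be a fixed constant, and let $k=k(n)$ and $\delta=\delta(n)$ satisfy $k=o(n)$ and $\delta=o(1)$ as $n\to\infty$. Then there exists a variable-length algorithm that computes $\mathsf{TH}_k$ from noisy queries with worst-case error probability at most $\delta$, i.e. $\max_{\mathbf{x}\in\{0,1\}^n}\mathbb{P}(\widehat{\mathsf{TH}}_k\neq\mathsf{TH}_k(\mathbf{x})\mid\mathbf{x})\le\delta$, and whose number of queries $M$ satisfies \[ \mathbb{E}[M\mid\mathbf{x}]\le(1+o(1))\,\frac{n\log\frac{k}{\delta}}{D_{\mathsf{KL}}(p\|1-p)} \] for every input instance $\mathbf{x}\in\{0,1\}^n$.
   Context: For $\mathbf{x}=(x_1,\dots,x_n)\in\{0,1\}^n$ and a positive integer $k$, the threshold-$k$ function is $\mathsf{TH}_k(\mathbf{x})=1$ if $\sum_{i=1}^n x_i\ge k$ and $\mathsf{TH}_k(\mathbf{x})=0$ otherwise. Noisy query model: at each time step the algorithm chooses an index $i\in[n]$ (possibly depending on all previous responses) and observes $x_i\oplus Z$, where $Z\sim\mathsf{Bern}(p)$ is independent of everything else; $p$ is known to the algorithm. A variable-length algorithm may decide adaptively when to stop (so the number of queries $M$ is random), and then outputs an estimate $\widehat{\mathsf{TH}}_k\in\{0,1\}$. $D_{\mathsf{KL}}(p\|1-p)=(1-2p)\log\frac{1-p}{p}$; $\log$ is the natural logarithm. The $o(1)$ terms are with respect to $n\to\infty$. *)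

theory Defs
  imports "HOL-Probability.Probability"
begin

text \<open>A (possibly randomized)
variable-length adaptive algorithm is given in behavioural form: given the history
of (queried index, observed noisy response) pairs, it chooses (randomly) either
Inl i (query index i) or Inr b (stop and output b).\<close>

type_synonym hist = "(nat \<times> bool) list"

datatype run_state = Running hist | Stopped bool

definition TH :: "nat \<Rightarrow> bool list \<Rightarrow> bool" where
  "TH k x = (k \<le> length (filter id x))"

definition KL_p :: "real \<Rightarrow> real" where
  "KL_p p = (1 - 2 * p) * ln ((1 - p) / p)"

definition valid_alg :: "nat \<Rightarrow> (hist \<Rightarrow> (nat + bool) pmf) \<Rightarrow> bool" where
  "valid_alg n A = (\<forall>h. set_pmf (A h) \<subseteq> Inl ` {..<n} \<union> range Inr)"

text \<open>One step: query x_i and observe x_i XOR Z with Z ~ Bern(p) (True with prob. p).\<close>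
definition step :: "(hist \<Rightarrow> (nat + bool) pmf) \<Rightarrow> real \<Rightarrow> bool list \<Rightarrow> run_state \<Rightarrow> run_state pmf" where
  "step A p x s = (case s of
      Stopped b \<Rightarrow> return_pmf (Stopped b)
    | Running h \<Rightarrow> bind_pmf (A h) (\<lambda>a. case a of
          Inr b \<Rightarrow> return_pmf (Stopped b)
        | Inl i \<Rightarrow> map_pmf (\<lambda>z. Running (h @ [(i, (x ! i) \<noteq> z)])) (bernoulli_pmf p)))"

text \<open>Distribution of the state after t algorithm actions. Being Running at time t
means exactly t queries have been made and the algorithm has not stopped.\<close>
fun state_dist :: "(hist \<Rightarrow> (nat + bool) pmf) \<Rightarrow> real \<Rightarrow> bool list \<Rightarrow> nat \<Rightarrow> run_state pmf" where
  "state_dist A p x 0 = return_pmf (Running [])"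
| "state_dist A p x (Suc t) = bind_pmf (state_dist A p x t) (step A p x)"

definition is_running :: "run_state \<Rightarrow> bool" where
  "is_running s = (case s of Running _ \<Rightarrow> True | Stopped _ \<Rightarrow> False)"

definition output_prob :: "(hist \<Rightarrow> (nat + bool) pmf) \<Rightarrow> real \<Rightarrow> bool list \<Rightarrow> bool \<Rightarrow> real" where
  "output_prob A p x b = (SUP t. measure_pmf.prob (state_dist A p x t) {Stopped b})"

text \<open>Error probability: P(output \<noteq> TH_k(x)); non-termination counts as an error.\<close>
definition error_prob :: "(hist \<Rightarrow> (nat + bool) pmf) \<Rightarrow> real \<Rightarrow> nat \<Rightarrow> bool list \<Rightarrow> real" where
  "error_prob A p k x = 1 - output_prob A p x (TH k x)"

text \<open>E[M] = sum_{t>=1} P(M >= t), as an extended nonnegative real.\<close>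
definition expected_queries :: "(hist \<Rightarrow> (nat + bool) pmf) \<Rightarrow> real \<Rightarrow> bool list \<Rightarrow> ennreal" where
  "expected_queries A p x =
     (\<Sum>t. ennreal (measure_pmf.prob (state_dist A p x (Suc t)) {s. is_running s}))"

end

theory Submission
  imports Defs
begin

declare state_dist.simps(2)[simp del]

definition detA :: "(hist \<Rightarrow> nat + bool) \<Rightarrow> hist \<Rightarrow> (nat + bool) pmf" where
  "detA f = (\<lambda>h. return_pmf (f h))"

lemma step_det_Running:
  "step (detA f) p x (Running h) = (case f h of Inr b \<Rightarrow> return_pmf (Stopped b)
      | Inl i \<Rightarrow> map_pmf (\<lambda>z. Running (h @ [(i, x!i \<noteq> z)])) (bernoulli_pmf p))"
  by (cases "f h") (simp_all add: step_def detA_def bind_return_pmf)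

lemma step_Stopped: "step A p x (Stopped b) = return_pmf (Stopped b)"
  by (simp add: step_def)

lemma ennreal_comb:
  assumes "0 \<le> a" "0 \<le> b" "0 \<le> p" "p \<le> 1"
  shows "ennreal a * ennreal p + ennreal b * ennreal (1-p) = ennreal (a*p + b*(1-p))"
proof -
  have "ennreal (a*p + b*(1-p)) = ennreal (a*p) + ennreal (b*(1-p))"
    using assms by (intro ennreal_plus) auto
  also have "\<dots> = ennreal a * ennreal p + ennreal b * ennreal (1-p)"
    using assms by (simp only: ennreal_mult) 
  finally show ?thesis by simp
qed

definition Gt :: "(hist \<Rightarrow> real) \<Rightarrow> run_state \<Rightarrow> ennreal" where
  "Gt \<Phi> s = (case s of Running h \<Rightarrow> ennreal (\<Phi> h) | Stopped _ \<Rightarrow> 0)"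

lemma time_step:
  assumes p: "0 \<le> p" "p \<le> 1" and nn: "\<And>h. 0 \<le> \<Phi> h"
   and dr: "\<And>h i. f h = Inl i \<Longrightarrow> p * (\<Phi> (h @ [(i, \<not> x!i)]) + 1) + (1-p) * (\<Phi> (h@[(i, x!i)]) + 1) \<le> \<Phi> h"
  shows "(\<integral>\<^sup>+s'. Gt \<Phi> s' + indicator {s. is_running s} s' \<partial>step (detA f) p x s) \<le> Gt \<Phi> s"
proof (cases s)
  case (Stopped b)
  then show ?thesis by (simp add: step_Stopped Gt_def is_running_def)
next
  case (Running h)
  show ?thesis
  proof (cases "f h")
    case (Inr b)
    then show ?thesis using Running by (simp add: step_det_Running Gt_def is_running_def)
  next
    case (Inl i)
    have "(\<integral>\<^sup>+s'. Gt \<Phi> s' + indicator {s. is_running s} s' \<partial>step (detA f) p x s)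
       = ennreal (\<Phi> (h @ [(i, \<not> x!i)]) + 1) * ennreal p + ennreal (\<Phi> (h@[(i, x!i)]) + 1) * ennreal (1-p)"
      using Running Inl p nn by (simp add: step_det_Running Gt_def is_running_def)
    also have "\<dots> = ennreal ((\<Phi> (h @ [(i, \<not> x!i)]) + 1) * p + (\<Phi> (h@[(i, x!i)]) + 1) * (1-p))"
      using p nn by (intro ennreal_comb) (auto intro: add_nonneg_nonneg)
    also have "\<dots> \<le> ennreal (\<Phi> h)"
      using dr[OF Inl] by (intro ennreal_leI) (simp add: mult.commute)
    finally show ?thesis using Running by (simp add: Gt_def)
  qed
qed

lemma time_induct:
  assumes p: "0 \<le> p" "p \<le> 1" and nn: "\<And>h. 0 \<le> \<Phi> h"
   and dr: "\<And>h i. f h = Inl i \<Longrightarrow> p * (\<Phi> (h @ [(i, \<not> x!i)]) + 1) + (1-p) * (\<Phi> (h@[(i, x!i)]) + 1) \<le> \<Phi> h"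
  shows "(\<integral>\<^sup>+s. Gt \<Phi> s \<partial>state_dist (detA f) p x t)
     + (\<Sum>j<t. emeasure (state_dist (detA f) p x (Suc j)) {s. is_running s}) \<le> ennreal (\<Phi> [])"
proof (induction t)
  case 0
  then show ?case by (simp add: Gt_def)
next
  case (Suc t)
  let ?X = "state_dist (detA f) p x t"
  have "(\<integral>\<^sup>+s. Gt \<Phi> s \<partial>state_dist (detA f) p x (Suc t)) + emeasure (state_dist (detA f) p x (Suc t)) {s. is_running s}
     = (\<integral>\<^sup>+s. Gt \<Phi> s + indicator {s. is_running s} s \<partial>state_dist (detA f) p x (Suc t))"
    by (subst nn_integral_add) auto
  also have "\<dots> = (\<integral>\<^sup>+s. (\<integral>\<^sup>+s'. Gt \<Phi> s' + indicator {s. is_running s} s' \<partial>step (detA f) p x s) \<partial>?X)"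
    by (simp add: state_dist.simps(2))
  also have "\<dots> \<le> (\<integral>\<^sup>+s. Gt \<Phi> s \<partial>?X)"
    by (intro nn_integral_mono time_step[OF p nn dr]) auto
  finally have *: "(\<integral>\<^sup>+s. Gt \<Phi> s \<partial>state_dist (detA f) p x (Suc t)) + emeasure (state_dist (detA f) p x (Suc t)) {s. is_running s}
     \<le> (\<integral>\<^sup>+s. Gt \<Phi> s \<partial>?X)" .
  have "(\<integral>\<^sup>+s. Gt \<Phi> s \<partial>state_dist (detA f) p x (Suc t))
     + (\<Sum>j<Suc t. emeasure (state_dist (detA f) p x (Suc j)) {s. is_running s})
     = ((\<integral>\<^sup>+s. Gt \<Phi> s \<partial>state_dist (detA f) p x (Suc t)) + emeasure (state_dist (detA f) p x (Suc t)) {s. is_running s})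
     + (\<Sum>j<t. emeasure (state_dist (detA f) p x (Suc j)) {s. is_running s})"
    by (simp add: algebra_simps)
  also have "\<dots> \<le> (\<integral>\<^sup>+s. Gt \<Phi> s \<partial>?X) + (\<Sum>j<t. emeasure (state_dist (detA f) p x (Suc j)) {s. is_running s})"
    using * by (rule add_right_mono)
  also have "\<dots> \<le> ennreal (\<Phi> [])" using Suc .
  finally show ?case .
qed

lemma time_partial:
  assumes p: "0 \<le> p" "p \<le> 1" and nn: "\<And>h. 0 \<le> \<Phi> h"
   and dr: "\<And>h i. f h = Inl i \<Longrightarrow> p * (\<Phi> (h @ [(i, \<not> x!i)]) + 1) + (1-p) * (\<Phi> (h@[(i, x!i)]) + 1) \<le> \<Phi> h"
  shows "(\<Sum>j<t. measure_pmf.prob (state_dist (detA f) p x (Suc j)) {s. is_running s}) \<le> \<Phi> []"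
proof -
  have "ennreal (\<Sum>j<t. measure_pmf.prob (state_dist (detA f) p x (Suc j)) {s. is_running s})
     = (\<Sum>j<t. emeasure (state_dist (detA f) p x (Suc j)) {s. is_running s})"
    by (simp add: measure_pmf.emeasure_eq_measure sum_ennreal)
  also have "\<dots> \<le> ennreal (\<Phi> [])"
    by (rule order_trans[OF add_increasing[OF zero_le order_refl] time_induct[OF p nn dr, where t=t]])
  finally show ?thesis using nn[of "[]"] by (simp add: ennreal_le_iff)
qed

lemma time_lemma:
  assumes p: "0 \<le> p" "p \<le> 1" and nn: "\<And>h. 0 \<le> \<Phi> h"
   and dr: "\<And>h i. f h = Inl i \<Longrightarrow> p * (\<Phi> (h @ [(i, \<not> x!i)]) + 1) + (1-p) * (\<Phi> (h@[(i, x!i)]) + 1) \<le> \<Phi> h"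
  shows "expected_queries (detA f) p x \<le> ennreal (\<Phi> [])"
  unfolding expected_queries_def
proof (rule suminf_le_const[OF summableI])
  fix t
  have "(\<Sum>j<t. ennreal (measure_pmf.prob (state_dist (detA f) p x (Suc j)) {s. is_running s}))
     = ennreal (\<Sum>j<t. measure_pmf.prob (state_dist (detA f) p x (Suc j)) {s. is_running s})"
    by (rule sum_ennreal) simp
  also have "\<dots> \<le> ennreal (\<Phi> [])" by (rule ennreal_leI, rule time_partial[OF p nn dr])
  finally show "(\<Sum>j<t. ennreal (measure_pmf.prob (state_dist (detA f) p x (Suc j)) {s. is_running s})) \<le> ennreal (\<Phi> [])" .
qed

definition Ge :: "(hist \<Rightarrow> real) \<Rightarrow> bool \<Rightarrow> run_state \<Rightarrow> ennreal" where
  "Ge W T s = (case s of Running h \<Rightarrow> ennreal (W h) | Stopped b \<Rightarrow> (if b = T then 0 else 1))"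

lemma err_step:
  assumes p: "0 \<le> p" "p \<le> 1" and nn: "\<And>h. 0 \<le> W h"
   and sm: "\<And>h i. f h = Inl i \<Longrightarrow> p * W (h @ [(i, \<not> x!i)]) + (1-p) * W (h@[(i, x!i)]) \<le> W h"
   and bad: "\<And>h b. f h = Inr b \<Longrightarrow> b \<noteq> T \<Longrightarrow> 1 \<le> W h"
  shows "(\<integral>\<^sup>+s'. Ge W T s' \<partial>step (detA f) p x s) \<le> Ge W T s"
proof (cases s)
  case (Stopped b)
  then show ?thesis by (simp add: step_Stopped Ge_def)
next
  case (Running h)
  show ?thesis
  proof (cases "f h")
    case (Inr b)
    then show ?thesis using Running bad[OF Inr] by (simp add: step_det_Running Ge_def)
  next
    case (Inl i)
    have "(\<integral>\<^sup>+s'. Ge W T s' \<partial>step (detA f) p x s)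
       = ennreal (W (h @ [(i, \<not> x!i)])) * ennreal p + ennreal (W (h@[(i, x!i)])) * ennreal (1-p)"
      using Running Inl p nn by (simp add: step_det_Running Ge_def)
    also have "\<dots> = ennreal (W (h @ [(i, \<not> x!i)]) * p + W (h@[(i, x!i)]) * (1-p))"
      using p nn by (intro ennreal_comb) auto
    also have "\<dots> \<le> ennreal (W h)"
      using sm[OF Inl] by (intro ennreal_leI) (simp add: mult.commute)
    finally show ?thesis using Running by (simp add: Ge_def)
  qed
qed

lemma err_induct:
  assumes p: "0 \<le> p" "p \<le> 1" and nn: "\<And>h. 0 \<le> W h"
   and sm: "\<And>h i. f h = Inl i \<Longrightarrow> p * W (h @ [(i, \<not> x!i)]) + (1-p) * W (h@[(i, x!i)]) \<le> W h"
   and bad: "\<And>h b. f h = Inr b \<Longrightarrow> b \<noteq> T \<Longrightarrow> 1 \<le> W h"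
  shows "(\<integral>\<^sup>+s. Ge W T s \<partial>state_dist (detA f) p x t) \<le> ennreal (W [])"
proof (induction t)
  case 0
  then show ?case by (simp add: Ge_def)
next
  case (Suc t)
  have "(\<integral>\<^sup>+s. Ge W T s \<partial>state_dist (detA f) p x (Suc t))
      = (\<integral>\<^sup>+s. (\<integral>\<^sup>+s'. Ge W T s' \<partial>step (detA f) p x s) \<partial>state_dist (detA f) p x t)"
    by (simp add: state_dist.simps(2))
  also have "\<dots> \<le> (\<integral>\<^sup>+s. Ge W T s \<partial>state_dist (detA f) p x t)"
    by (intro nn_integral_mono err_step[OF p nn sm bad]) auto
  finally show ?case using Suc by (rule order_trans)
qed

lemma err_wrong:
  assumes p: "0 \<le> p" "p \<le> 1" and nn: "\<And>h. 0 \<le> W h"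
   and sm: "\<And>h i. f h = Inl i \<Longrightarrow> p * W (h @ [(i, \<not> x!i)]) + (1-p) * W (h@[(i, x!i)]) \<le> W h"
   and bad: "\<And>h b. f h = Inr b \<Longrightarrow> b \<noteq> T \<Longrightarrow> 1 \<le> W h"
  shows "measure_pmf.prob (state_dist (detA f) p x t) {Stopped (\<not> T)} \<le> W []"
proof -
  have "emeasure (state_dist (detA f) p x t) {Stopped (\<not> T)}
      = (\<integral>\<^sup>+s. indicator {Stopped (\<not> T)} s \<partial>state_dist (detA f) p x t)"
    by simp
  also have "\<dots> \<le> (\<integral>\<^sup>+s. Ge W T s \<partial>state_dist (detA f) p x t)"
    by (intro nn_integral_mono) (auto simp: Ge_def split: split_indicator run_state.split)
  also have "\<dots> \<le> ennreal (W [])" by (rule err_induct[OF p nn sm bad])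
  finally show ?thesis using nn[of "[]"]
    by (simp add: measure_pmf.emeasure_eq_measure ennreal_le_iff)
qed

lemma err_lemma:
  assumes p: "0 \<le> p" "p \<le> 1" and nn: "\<And>h. 0 \<le> W h"
   and sm: "\<And>h i. f h = Inl i \<Longrightarrow> p * W (h @ [(i, \<not> x!i)]) + (1-p) * W (h@[(i, x!i)]) \<le> W h"
   and bad: "\<And>h b. f h = Inr b \<Longrightarrow> b \<noteq> TH k x \<Longrightarrow> 1 \<le> W h"
   and nnP: "\<And>h. 0 \<le> \<Phi> h"
   and dr: "\<And>h i. f h = Inl i \<Longrightarrow> p * (\<Phi> (h @ [(i, \<not> x!i)]) + 1) + (1-p) * (\<Phi> (h@[(i, x!i)]) + 1) \<le> \<Phi> h"
  shows "error_prob (detA f) p k x \<le> W []"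
proof -
  define T where "T = TH k x"
  let ?X = "\<lambda>t. state_dist (detA f) p x t"
  let ?R = "\<lambda>t. measure_pmf.prob (?X t) {Stopped T}"
  let ?U = "\<lambda>t. measure_pmf.prob (?X t) {s. is_running s}"
  have bad': "\<And>h b. f h = Inr b \<Longrightarrow> b \<noteq> T \<Longrightarrow> 1 \<le> W h" using bad T_def by blast
  have one: "1 - ?R t \<le> W [] + ?U t" for t
  proof -
    have "1 - ?R t = measure_pmf.prob (?X t) (UNIV - {Stopped T})"
      using measure_pmf.prob_compl[of "{Stopped T}" "?X t"] by simp
    also have "\<dots> \<le> measure_pmf.prob (?X t) ({Stopped (\<not> T)} \<union> {s. is_running s})"
    proof (rule measure_pmf.finite_measure_mono)
      show "UNIV - {Stopped T} \<subseteq> {Stopped (\<not> T)} \<union> {s. is_running s}"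
      proof
        fix s assume "s \<in> UNIV - {Stopped T}"
        then show "s \<in> {Stopped (\<not> T)} \<union> {s. is_running s}"
          by (cases s) (auto simp: is_running_def)
      qed
    qed simp
    also have "\<dots> \<le> measure_pmf.prob (?X t) {Stopped (\<not> T)} + ?U t"
      by (rule measure_Un_le) auto
    also have "\<dots> \<le> W [] + ?U t"
      using err_wrong[OF p nn sm bad'] by simp
    finally show ?thesis .
  qed
  have bdd: "bdd_above (range ?R)"
    by (intro bdd_aboveI[of _ 1]) auto
  have "error_prob (detA f) p k x \<le> W [] + e" if e: "e > 0" for e
  proof -
    obtain t :: nat where t: "\<Phi> [] / e < t" using reals_Archimedean2 by blast
    have tpos: "t > 0" using t nnP[of "[]"] e
      by (metis divide_nonneg_pos linorder_not_less of_nat_0_less_iff order_le_less_trans)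
    have "\<exists>j<t. ?U (Suc j) \<le> \<Phi> [] / t"
    proof (rule ccontr)
      assume "\<not> ?thesis"
      then have "\<forall>j\<in>{..<t}. \<Phi> [] / t < ?U (Suc j)" by auto
      then have "(\<Sum>j<t. \<Phi> [] / t) < (\<Sum>j<t. ?U (Suc j))"
        using tpos by (intro sum_strict_mono) auto
      also have "\<dots> \<le> \<Phi> []" by (rule time_partial[OF p nnP dr])
      finally show False using tpos by simp
    qed
    then obtain j where j: "?U (Suc j) \<le> \<Phi> [] / t" by blast
    have "\<Phi> [] / t < e" using t tpos e by (simp add: field_simps)
    have "error_prob (detA f) p k x = 1 - (SUP t. ?R t)"
      by (simp add: error_prob_def output_prob_def T_def)
    also have "\<dots> \<le> 1 - ?R (Suc j)"
      using cSUP_upper[OF UNIV_I bdd, of "Suc j"] by simp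
    also have "\<dots> \<le> W [] + ?U (Suc j)" by (rule one)
    also have "\<dots> \<le> W [] + e" using j \<open>\<Phi> [] / t < e\<close> by simp
    finally show ?thesis .
  qed
  then show ?thesis by (rule field_le_epsilon)
qed

definition aupd :: "nat \<Rightarrow> nat \<Rightarrow> nat \<Rightarrow> nat \<Rightarrow> nat \<times> int \<times> nat \<Rightarrow> bool \<Rightarrow> nat \<times> int \<times> nat" where
  "aupd n k a b s y = (case s of (i, S, c) \<Rightarrow>
     if n \<le> i \<or> k \<le> c then (i, S, c)
     else if int a \<le> S + (if y then 1 else -1) then (Suc i, 0, Suc c)
     else if S + (if y then 1 else -1) \<le> - int b then (Suc i, 0, c)
     else (i, S + (if y then 1 else -1), c))"

definition ast :: "nat \<Rightarrow> nat \<Rightarrow> nat \<Rightarrow> nat \<Rightarrow> hist \<Rightarrow> nat \<times> int \<times> nat" where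
  "ast n k a b h = foldl (\<lambda>s q. aupd n k a b s (snd q)) (0, 0, 0) h"

definition aact :: "nat \<Rightarrow> nat \<Rightarrow> nat \<Rightarrow> nat \<Rightarrow> hist \<Rightarrow> nat + bool" where
  "aact n k a b h = (case ast n k a b h of (i, S, c) \<Rightarrow>
     if k \<le> c then Inr True else if n \<le> i then Inr False else Inl i)"

lemma valid_aact: "valid_alg n (detA (aact n k a b))"
  unfolding valid_alg_def detA_def aact_def
  by (auto split: prod.splits if_splits)

record gs = gi :: nat  gS :: int  gc :: nat  go :: nat  gtp :: nat  gfq :: nat  gtp1 :: nat  gfn1 :: nat

definition gupd :: "nat \<Rightarrow> nat \<Rightarrow> nat \<Rightarrow> nat \<Rightarrow> bool list \<Rightarrow> gs \<Rightarrow> bool \<Rightarrow> gs" where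
  "gupd n k a b x g y = (
     if n \<le> gi g \<or> k \<le> gc g then g
     else if int a \<le> gS g + (if y then 1 else -1) then
       g\<lparr>gi := Suc (gi g), gS := 0, gc := Suc (gc g), go := go g + of_bool (x ! gi g),
         gtp := gtp g + of_bool (x ! gi g), gfq := gfq g + of_bool (\<not> x ! gi g),
         gtp1 := gtp1 g + of_bool (x ! gi g \<and> go g < k)\<rparr>
     else if gS g + (if y then 1 else -1) \<le> - int b then
       g\<lparr>gi := Suc (gi g), gS := 0, go := go g + of_bool (x ! gi g),
         gfn1 := gfn1 g + of_bool (x ! gi g \<and> go g < k)\<rparr>
     else g\<lparr>gS := gS g + (if y then 1 else -1)\<rparr>)"

definition g0 :: gs where
  "g0 = \<lparr>gi = 0, gS = 0, gc = 0, go = 0, gtp = 0, gfq = 0, gtp1 = 0, gfn1 = 0\<rparr>"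

definition gst :: "nat \<Rightarrow> nat \<Rightarrow> nat \<Rightarrow> nat \<Rightarrow> bool list \<Rightarrow> hist \<Rightarrow> gs" where
  "gst n k a b x h = foldl (\<lambda>g q. gupd n k a b x g (snd q)) g0 h"

lemma gst_snoc: "gst n k a b x (h @ [q]) = gupd n k a b x (gst n k a b x h) (snd q)"
  by (simp add: gst_def)

lemma ast_snoc: "ast n k a b (h @ [q]) = aupd n k a b (ast n k a b h) (snd q)"
  by (simp add: ast_def)

lemma gst_proj: "ast n k a b h = (gi (gst n k a b x h), gS (gst n k a b x h), gc (gst n k a b x h))"
proof (induction h rule: rev_induct)
  case Nil
  then show ?case by (simp add: ast_def gst_def g0_def)
next
  case (snoc q h)
  then show ?case
    by (simp add: ast_snoc gst_snoc aupd_def gupd_def)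
qed

lemma card_Suc_pred: "card {j. j < Suc i \<and> P j} = card {j. j < i \<and> P j} + of_bool (P i)"
proof -
  have "{j. j < Suc i \<and> P j} = {j. j < i \<and> P j} \<union> (if P i then {i} else {})"
    by (auto simp: less_Suc_eq)
  then show ?thesis by (auto simp: card_insert_if)
qed

definition Inv :: "nat \<Rightarrow> nat \<Rightarrow> nat \<Rightarrow> nat \<Rightarrow> bool list \<Rightarrow> gs \<Rightarrow> bool" where
  "Inv n k a b x g \<longleftrightarrow> gi g \<le> n \<and> - int b < gS g \<and> gS g < int a \<and> gc g = gtp g + gfq g
     \<and> gtp g \<le> go g \<and> go g = card {j. j < gi g \<and> x ! j} \<and> gtp1 g \<le> gtp g
     \<and> gtp1 g + gfn1 g = min (go g) k"

lemma Inv_g0: "a \<ge> 1 \<Longrightarrow> b \<ge> 1 \<Longrightarrow> Inv n k a b x g0"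
  by (simp add: Inv_def g0_def)

lemma Inv_gupd: assumes "a \<ge> 1" "b \<ge> 1" "Inv n k a b x g" shows "Inv n k a b x (gupd n k a b x g y)"
  using assms unfolding Inv_def gupd_def
  by (auto simp: card_Suc_pred of_bool_def split: if_splits)

lemma Inv_gst: "a \<ge> 1 \<Longrightarrow> b \<ge> 1 \<Longrightarrow> Inv n k a b x (gst n k a b x h)"
proof (induction h rule: rev_induct)
  case Nil
  then show ?case by (simp add: gst_def Inv_g0)
next
  case (snoc q h)
  then show ?case by (simp add: gst_snoc Inv_gupd)
qed

locale thr =
  fixes n k a b :: nat and p :: real and x :: "bool list"
  assumes a1: "a \<ge> 1" and b1: "b \<ge> 1" and p0: "0 < p" and p12: "p < 1/2" and lx: "length x = n"
begin

definition r :: real where "r = p / (1 - p)"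
definition mu :: real where "mu = 1 - 2 * p"
definition beta :: real where "beta = real a / (mu * (1 - r ^ b))"
definition Z :: "nat \<Rightarrow> nat" where "Z i = card {j. i < j \<and> j < n \<and> \<not> x ! j}"

lemma r_pos: "r > 0" and r_lt1: "r < 1" and mu_pos: "mu > 0"
  using p0 p12 by (auto simp: r_def mu_def field_simps)

lemma rb_lt1: "r ^ b < 1"
  using r_pos r_lt1 b1 by (simp add: power_less_one_iff)

lemma beta_pos: "beta > 0"
  using a1 mu_pos rb_lt1 by (simp add: beta_def)

lemma beta_eq: "beta * (1 - r ^ b) = real a / mu"
  using mu_pos rb_lt1 by (simp add: beta_def field_simps)

lemma r_id: "m \<ge> 1 \<Longrightarrow> p * r ^ (m - 1) + (1 - p) * r ^ Suc m = r ^ m"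
proof -
  assume "m \<ge> 1"
  then obtain m' where m: "m = Suc m'" by (cases m) auto
  have h: "(1 - p) * r = p" using p0 p12 by (simp add: r_def)
  have h2: "(1 - p) * r^2 = p * r" using h by (simp add: power2_eq_square mult.assoc[symmetric])
  have h3: "r - p * r = p" using h by (simp add: algebra_simps)
  have "p + (1 - p) * r^2 = r" using h2 h3 by linarith
  then have "r ^ m' * (p + (1 - p) * r^2) = r ^ m' * r" by simp
  then show ?thesis by (simp add: m algebra_simps power2_eq_square)
qed

lemma lin1: "p * ((X + 1) / mu) + (1 - p) * ((X - 1) / mu) + 1 = X / mu"
proof -
  have "p * ((X + 1) / mu) + (1 - p) * ((X - 1) / mu) = (p * (X + 1) + (1 - p) * (X - 1)) / mu"
    using mu_pos by (simp add: field_simps)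
  also have "p * (X + 1) + (1 - p) * (X - 1) = X - mu" by (simp add: mu_def algebra_simps)
  also have "(X - mu) / mu = X / mu - 1" using mu_pos by (simp add: diff_divide_distrib)
  finally show ?thesis by simp
qed

lemma Z_Suc: "Suc i < n \<Longrightarrow> Z i = Z (Suc i) + of_bool (\<not> x ! Suc i)"
proof -
  assume "Suc i < n"
  then have "{j. i < j \<and> j < n \<and> \<not> x ! j} = {j. Suc i < j \<and> j < n \<and> \<not> x ! j} \<union> (if \<not> x ! Suc i then {Suc i} else {})"
    by (auto; metis Suc_lessI)
  then show ?thesis unfolding Z_def by (auto simp: card_insert_if)
qed

lemma Z_end: "n \<le> Suc i \<Longrightarrow> Z i = 0"
  unfolding Z_def by (auto intro!: card_eq_0_iff[THEN iffD2])

lemma Z_le: "Z i \<le> n"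
proof -
  have "Z i \<le> card {..<n}" unfolding Z_def by (intro card_mono) auto
  then show ?thesis by simp
qed

definition cur1' :: "real \<Rightarrow> nat \<Rightarrow> real" where
  "cur1' X m = X / mu - beta + beta * r ^ m"

lemma cur1'_id: "m \<ge> 1 \<Longrightarrow> p * cur1' (X + 1) (m - 1) + (1 - p) * cur1' (X - 1) (Suc m) + 1 = cur1' X m"
proof -
  assume m: "m \<ge> 1"
  have "p * cur1' (X + 1) (m - 1) + (1 - p) * cur1' (X - 1) (Suc m) + 1
     = (p * ((X + 1) / mu) + (1 - p) * ((X - 1) / mu) + 1) - beta + beta * (p * r ^ (m - 1) + (1 - p) * r ^ Suc m)"
    unfolding cur1'_def by (simp add: algebra_simps)
  also have "\<dots> = X / mu - beta + beta * r ^ m" using lin1 r_id[OF m] by simp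
  finally show ?thesis by (simp add: cur1'_def)
qed

lemma cur0_id: "p * ((X + 1) / mu) + (1 - p) * ((X - 1) / mu) + 1 = X / mu"
  by (rule lin1)

definition FPhi :: "gs \<Rightarrow> int \<Rightarrow> real" where
  "FPhi g s = real b / mu * Z (gi g) + real (k - gc g) * beta
     + (if x ! gi g then (real a - real_of_int s) / mu - beta * (1 - r ^ nat (s + int b)) else real_of_int (s + int b) / mu)"

lemma FPhi_alt: "FPhi g s = real b / mu * Z (gi g) + real (k - gc g) * beta
     + (if x ! gi g then cur1' (real a - real_of_int s) (nat (s + int b)) else real_of_int (s + int b) / mu)"
  unfolding FPhi_def cur1'_def by (simp add: algebra_simps)

definition Phig :: "gs \<Rightarrow> real" where
  "Phig g = (if n \<le> gi g \<or> k \<le> gc g then 0 else FPhi g (gS g))"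

lemma Phig_nonneg: assumes "Inv n k a b x g" shows "0 \<le> Phig g"
proof (cases "n \<le> gi g \<or> k \<le> gc g")
  case False
  then have c: "real (k - gc g) \<ge> 1" by auto
  have "r ^ nat (gS g + b) \<ge> 0" using r_pos by simp
  then have "beta * (1 - r ^ nat (gS g + b)) \<le> beta" using beta_pos by (simp add: mult_left_le)
  moreover have "real (k - gc g) * beta \<ge> beta" using c beta_pos by simp
  ultimately have A: "beta * (1 - r ^ nat (gS g + b)) \<le> real (k - gc g) * beta" by linarith
  have B: "real (k - gc g) * beta \<ge> 0" using beta_pos by simp
  moreover note A
  moreover have "(real a - gS g) / mu \<ge> 0" "(gS g + b) / mu \<ge> 0"
    using assms mu_pos by (auto simp: Inv_def)
  moreover have "real b / mu * Z (gi g) \<ge> 0" using mu_pos by simp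
  ultimately show ?thesis using False unfolding Phig_def FPhi_def by auto
qed (auto simp: Phig_def)

lemma next_bit_le:
  assumes "gi g' = Suc i" "gS g' = 0"
  shows "Phig g' \<le> real b / mu * Z i + real (k - gc g') * beta"
proof (cases "n \<le> Suc i \<or> k \<le> gc g'")
  case True
  then show ?thesis using assms mu_pos beta_pos by (auto simp: Phig_def)
next
  case False
  have z0: "real a / mu - beta * (1 - r ^ b) = 0" using beta_eq by linarith
  have P: "Phig g' = real b / mu * Z (Suc i) + real (k - gc g') * beta
      + (if x ! Suc i then real a / mu - beta * (1 - r ^ b) else real b / mu)"
    using False assms unfolding Phig_def FPhi_def by simp
  show ?thesis
  proof (cases "x ! Suc i")
    case True
    then show ?thesis using P z0 Z_Suc[of i] False by simp
  next
    case f: False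
    then show ?thesis using P Z_Suc[of i] False by (simp add: add_divide_distrib distrib_left)
  qed
qed

lemma Phi_next:
  assumes inv: "Inv n k a b x g" and i: "gi g < n" and c: "gc g < k"
  shows "Phig (gupd n k a b x g y) \<le> FPhi g (gS g + (if y then 1 else -1))"
proof -
  define S' where "S' = gS g + (if y then 1 else -1)"
  have rge: "r ^ m \<ge> 0" for m using r_pos by simp
  show ?thesis
  proof (cases "int a \<le> S'")
    case True
    then have S'a: "S' = int a" using inv by (auto simp: Inv_def S'_def split: if_splits)
    have "Phig (gupd n k a b x g y) \<le> real b / mu * Z (gi g) + real (k - Suc (gc g)) * beta"
      using True i c by (intro order_trans[OF next_bit_le]) (auto simp: gupd_def S'_def)
    also have "\<dots> \<le> FPhi g S'"
    proof -
      have "real (k - Suc (gc g)) * beta = real (k - gc g) * beta - beta" using c by (simp add: of_nat_diff algebra_simps)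
      moreover have "beta * (1 - r ^ nat (S' + b)) \<le> beta"
        using beta_pos rge by (simp add: mult_left_le)
      moreover have "(S' + b) / mu \<ge> 0" using S'a mu_pos by simp
      moreover have "- beta \<le> 0" using beta_pos by simp
      ultimately show ?thesis unfolding FPhi_def using S'a by auto
    qed
    finally show ?thesis by (simp add: S'_def)
  next
    case False
    show ?thesis
    proof (cases "S' \<le> - int b")
      case True
      then have S'b: "S' = - int b" using inv by (auto simp: Inv_def S'_def split: if_splits)
      have "Phig (gupd n k a b x g y) \<le> real b / mu * Z (gi g) + real (k - gc g) * beta"
        using True False i c by (intro order_trans[OF next_bit_le]) (auto simp: gupd_def S'_def)
      also have "\<dots> \<le> FPhi g S'"
        using S'b mu_pos unfolding FPhi_def by auto
      finally show ?thesis by (simp add: S'_def)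
    next
      case False2: False
      have "gupd n k a b x g y = g\<lparr>gS := S'\<rparr>"
        using False False2 i c by (simp add: gupd_def S'_def)
      then show ?thesis using False False2 i c by (simp add: Phig_def FPhi_def S'_def)
    qed
  qed
qed

lemma Phi_drift:
  assumes inv: "Inv n k a b x g" and i: "gi g < n" and c: "gc g < k"
  shows "p * (Phig (gupd n k a b x g (\<not> x ! gi g)) + 1) + (1 - p) * (Phig (gupd n k a b x g (x ! gi g)) + 1) \<le> Phig g"
proof -
  define S where "S = gS g"
  have le1: "Phig (gupd n k a b x g (\<not> x ! gi g)) \<le> FPhi g (S + (if x ! gi g then -1 else 1))"
    using Phi_next[OF inv i c, of "\<not> x ! gi g"] by (cases "x ! gi g") (simp_all add: S_def)
  have le2: "Phig (gupd n k a b x g (x ! gi g)) \<le> FPhi g (S + (if x ! gi g then 1 else -1))"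
    using Phi_next[OF inv i c, of "x ! gi g"] by (cases "x ! gi g") (simp_all add: S_def)
  have eq: "p * (FPhi g (S + (if x ! gi g then -1 else 1)) + 1) + (1 - p) * (FPhi g (S + (if x ! gi g then 1 else -1)) + 1) = FPhi g S"
  proof -
    define B where "B = real b / mu * Z (gi g) + real (k - gc g) * beta"
    define X where "X = (if x ! gi g then real a - real_of_int S else real_of_int (S + int b))"
    define m where "m = nat (S + b)"
    have h: "1 \<le> S + int b" using inv by (simp add: Inv_def S_def)
    have m1: "m \<ge> 1" using nat_mono[OF h] by (simp add: m_def)
    have e1: "nat (S + -1 + int b) = m - 1" and e2: "nat (S + 1 + int b) = Suc m"
      and e1': "nat (S + int b - 1) = m - Suc 0" and e2': "nat (1 + (S + int b)) = Suc m"
      using h by (simp_all add: m_def)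
    define C where "C = (\<lambda>X m. if x ! gi g then cur1' X m else X / mu)"
    have F1: "FPhi g (S + (if x ! gi g then -1 else 1)) = B + C (X + 1) (m - 1)"
      unfolding FPhi_alt B_def C_def X_def by (cases "x ! gi g") (simp_all add: e1 e1' algebra_simps)
    have F2: "FPhi g (S + (if x ! gi g then 1 else -1)) = B + C (X - 1) (Suc m)"
      unfolding FPhi_alt B_def C_def X_def by (cases "x ! gi g") (simp_all add: e2 e2' algebra_simps)
    have F0: "FPhi g S = B + C X m"
      unfolding FPhi_alt B_def C_def X_def m_def by (cases "x ! gi g") (simp_all add: algebra_simps)
    have CC: "p * C (X + 1) (m - 1) + (1 - p) * C (X - 1) (Suc m) + 1 = C X m"
      unfolding C_def using cur1'_id[OF m1] cur0_id by simp
    have "p * (B + C (X + 1) (m - 1) + 1) + (1 - p) * (B + C (X - 1) (Suc m) + 1)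
        = B + (p * C (X + 1) (m - 1) + (1 - p) * C (X - 1) (Suc m) + 1)"
      by (simp add: algebra_simps)
    then show ?thesis using F0 F1 F2 CC by simp
  qed
  have "p * (Phig (gupd n k a b x g (\<not> x ! gi g)) + 1) + (1 - p) * (Phig (gupd n k a b x g (x ! gi g)) + 1)
     \<le> p * (FPhi g (S + (if x ! gi g then -1 else 1)) + 1) + (1 - p) * (FPhi g (S + (if x ! gi g then 1 else -1)) + 1)"
    using le1 le2 p0 p12 by (intro add_mono mult_left_mono) auto
  also have "\<dots> = Phig g" using eq i c by (simp add: Phig_def S_def)
  finally show ?thesis .
qed

end

context thr begin

lemma r_nonneg: "0 \<le> r" using r_pos by simp

definition W0g :: "gs \<Rightarrow> real" where
  "W0g g = real (gfq g) + (if gi g < n \<and> \<not> x ! gi g then r ^ nat (int a - gS g) else 0) + r ^ a * Z (gi g)"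

definition W1g :: "gs \<Rightarrow> real" where
  "W1g g = real (gfn1 g) + (if gi g < n \<and> x ! gi g \<and> go g < k then r ^ nat (gS g + int b) + r ^ b * real (k - go g - 1)
      else r ^ b * real (k - go g))"

lemma W0g_nonneg: "0 \<le> W0g g"
  unfolding W0g_def using r_nonneg by auto

lemma W1g_nonneg: "0 \<le> W1g g"
  unfolding W1g_def using r_nonneg by auto

lemma W0_next: "(if Suc i < n \<and> \<not> x ! Suc i then r ^ nat (int a - 0) else 0) + r ^ a * Z (Suc i) = r ^ a * Z i"
proof (cases "Suc i < n")
  case True
  then show ?thesis using Z_Suc[OF True] by (auto simp: algebra_simps)
next
  case False
  then have "Z (Suc i) = 0" "Z i = 0" using Z_end by auto
  then show ?thesis using False by simp
qed

lemma W1_next: "(if i' < n \<and> x ! i' \<and> o' < k then r ^ nat (0 + int b) + r ^ b * real (k - o' - 1)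
      else r ^ b * real (k - o')) = r ^ b * real (k - o')"
proof -
  have "o' < k \<Longrightarrow> r ^ b + r ^ b * real (k - o' - 1) = r ^ b * real (k - o')"
    by (simp add: of_nat_diff algebra_simps)
  then show ?thesis by auto
qed

lemma gupd_up:
  assumes "gi g < n" "gc g < k" "int a \<le> gS g + (if y then 1 else -1)"
  shows "gi (gupd n k a b x g y) = Suc (gi g)" "gS (gupd n k a b x g y) = 0"
    "go (gupd n k a b x g y) = go g + of_bool (x ! gi g)"
    "gfq (gupd n k a b x g y) = gfq g + of_bool (\<not> x ! gi g)"
    "gfn1 (gupd n k a b x g y) = gfn1 g"
  using assms by (simp_all add: gupd_def)

lemma gupd_dn:
  assumes "gi g < n" "gc g < k" "\<not> int a \<le> gS g + (if y then 1 else -1)" "gS g + (if y then 1 else -1) \<le> - int b"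
  shows "gi (gupd n k a b x g y) = Suc (gi g)" "gS (gupd n k a b x g y) = 0"
    "go (gupd n k a b x g y) = go g + of_bool (x ! gi g)"
    "gfq (gupd n k a b x g y) = gfq g"
    "gfn1 (gupd n k a b x g y) = gfn1 g + of_bool (x ! gi g \<and> go g < k)"
  using assms by (simp_all add: gupd_def)

lemma gupd_mid:
  assumes "gi g < n" "gc g < k" "\<not> int a \<le> gS g + (if y then 1 else -1)" "\<not> gS g + (if y then 1 else -1) \<le> - int b"
  shows "gi (gupd n k a b x g y) = gi g" "gS (gupd n k a b x g y) = gS g + (if y then 1 else -1)"
    "go (gupd n k a b x g y) = go g"
    "gfq (gupd n k a b x g y) = gfq g"
    "gfn1 (gupd n k a b x g y) = gfn1 g"
  using assms by (simp_all add: gupd_def)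

lemma W0_reset:
  assumes "gi g' = Suc i" "gS g' = 0"
  shows "W0g g' = real (gfq g') + r ^ a * Z i"
proof -
  have "W0g g' = real (gfq g') + ((if Suc i < n \<and> \<not> x ! Suc i then r ^ nat (int a - 0) else 0) + r ^ a * Z (Suc i))"
    unfolding W0g_def by (simp only: assms add.assoc)
  also have "\<dots> = real (gfq g') + r ^ a * Z i" by (simp only: W0_next)
  finally show ?thesis .
qed

lemma W1_reset:
  assumes "gi g' = Suc i" "gS g' = 0"
  shows "W1g g' = real (gfn1 g') + r ^ b * real (k - go g')"
proof -
  have "W1g g' = real (gfn1 g') + (if Suc i < n \<and> x ! Suc i \<and> go g' < k then r ^ nat (0 + int b) + r ^ b * real (k - go g' - 1)
      else r ^ b * real (k - go g'))"
    unfolding W1g_def by (simp only: assms)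
  also have "\<dots> = real (gfn1 g') + r ^ b * real (k - go g')" by (simp only: W1_next)
  finally show ?thesis .
qed

lemma W0_drift:
  assumes inv: "Inv n k a b x g" and i: "gi g < n" and c: "gc g < k"
  shows "p * W0g (gupd n k a b x g (\<not> x ! gi g)) + (1 - p) * W0g (gupd n k a b x g (x ! gi g)) \<le> W0g g"
proof (cases "x ! gi g")
  case True
  have eq: "W0g (gupd n k a b x g y) = W0g g" for y
  proof -
    consider (up) "int a \<le> gS g + (if y then 1 else -1)"
      | (dn) "\<not> int a \<le> gS g + (if y then 1 else -1)" "gS g + (if y then 1 else -1) \<le> - int b"
      | (mid) "\<not> int a \<le> gS g + (if y then 1 else -1)" "\<not> gS g + (if y then 1 else -1) \<le> - int b"
      by blast
    then show ?thesis
    proof cases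
      case up
      note f = gupd_up[OF i c up]
      show ?thesis using W0_reset[OF f(1,2)] True i unfolding f by (simp add: W0g_def)
    next
      case dn
      note f = gupd_dn[OF i c dn]
      show ?thesis using W0_reset[OF f(1,2)] True i unfolding f by (simp add: W0g_def)
    next
      case mid
      note f = gupd_mid[OF i c mid]
      show ?thesis using True i unfolding W0g_def f by simp
    qed
  qed
  show ?thesis using eq by (simp add: algebra_simps)
next
  case False
  define S where "S = gS g"
  define F where "F = (\<lambda>s::int. real (gfq g) + r ^ nat (int a - s) + r ^ a * Z (gi g))"
  have le: "W0g (gupd n k a b x g y) \<le> F (S + (if y then 1 else -1))" for y
  proof -
    consider (up) "int a \<le> gS g + (if y then 1 else -1)"
      | (dn) "\<not> int a \<le> gS g + (if y then 1 else -1)" "gS g + (if y then 1 else -1) \<le> - int b"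
      | (mid) "\<not> int a \<le> gS g + (if y then 1 else -1)" "\<not> gS g + (if y then 1 else -1) \<le> - int b"
      by blast
    then show ?thesis
    proof cases
      case up
      then have e: "gS g + (if y then 1 else -1) = int a" using inv by (auto simp: Inv_def split: if_splits)
      note f = gupd_up[OF i c up]
      show ?thesis using W0_reset[OF f(1,2)] False unfolding f F_def S_def e by simp
    next
      case dn
      note f = gupd_dn[OF i c dn]
      show ?thesis using W0_reset[OF f(1,2)] False r_nonneg unfolding f F_def S_def by simp
    next
      case mid
      note f = gupd_mid[OF i c mid]
      show ?thesis using False i unfolding W0g_def F_def S_def f by simp
    qed
  qed
  define m where "m = nat (int a - S)"
  have h: "1 \<le> int a - S" using inv by (simp add: Inv_def S_def)
  have m1: "m \<ge> 1" using nat_mono[OF h] by (simp add: m_def)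
  have e1: "nat (int a - (S + 1)) = m - 1" and e2: "nat (int a - (S + -1)) = Suc m"
    using h by (simp_all add: m_def)
  have "p * W0g (gupd n k a b x g (\<not> x ! gi g)) + (1 - p) * W0g (gupd n k a b x g (x ! gi g))
      \<le> p * F (S + 1) + (1 - p) * F (S + -1)"
    using le[of True] le[of False] False p0 p12 by (intro add_mono mult_left_mono) auto
  also have "\<dots> = real (gfq g) + r ^ a * Z (gi g) + (p * r ^ (m - 1) + (1 - p) * r ^ Suc m)"
    unfolding F_def e1 e2 by (simp add: algebra_simps)
  also have "\<dots> = F S" unfolding F_def using r_id[OF m1] by (simp add: m_def)
  also have "\<dots> = W0g g" using i False unfolding F_def W0g_def S_def by simp
  finally show ?thesis .
qed

lemma W1_drift:
  assumes inv: "Inv n k a b x g" and i: "gi g < n" and c: "gc g < k"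
  shows "p * W1g (gupd n k a b x g (\<not> x ! gi g)) + (1 - p) * W1g (gupd n k a b x g (x ! gi g)) \<le> W1g g"
proof (cases "x ! gi g \<and> go g < k")
  case False
  have eq: "W1g (gupd n k a b x g y) = W1g g" for y
  proof -
    consider (up) "int a \<le> gS g + (if y then 1 else -1)"
      | (dn) "\<not> int a \<le> gS g + (if y then 1 else -1)" "gS g + (if y then 1 else -1) \<le> - int b"
      | (mid) "\<not> int a \<le> gS g + (if y then 1 else -1)" "\<not> gS g + (if y then 1 else -1) \<le> - int b"
      by blast
    then show ?thesis
    proof cases
      case up
      note f = gupd_up[OF i c up]
      show ?thesis using W1_reset[OF f(1,2)] False i unfolding f by (auto simp: W1g_def)
    next
      case dn
      note f = gupd_dn[OF i c dn]
      show ?thesis using W1_reset[OF f(1,2)] False i unfolding f by (auto simp: W1g_def)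
    next
      case mid
      note f = gupd_mid[OF i c mid]
      show ?thesis using False i unfolding W1g_def f by auto
    qed
  qed
  show ?thesis using eq by (simp add: algebra_simps)
next
  case True
  define S where "S = gS g"
  define F where "F = (\<lambda>s::int. real (gfn1 g) + r ^ nat (s + int b) + r ^ b * real (k - go g - 1))"
  have le: "W1g (gupd n k a b x g y) \<le> F (S + (if y then 1 else -1))" for y
  proof -
    consider (up) "int a \<le> gS g + (if y then 1 else -1)"
      | (dn) "\<not> int a \<le> gS g + (if y then 1 else -1)" "gS g + (if y then 1 else -1) \<le> - int b"
      | (mid) "\<not> int a \<le> gS g + (if y then 1 else -1)" "\<not> gS g + (if y then 1 else -1) \<le> - int b"
      by blast
    then show ?thesis
    proof cases
      case up
      note f = gupd_up[OF i c up]
      show ?thesis using W1_reset[OF f(1,2)] True r_nonneg unfolding f F_def S_def by simp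
    next
      case dn
      then have e: "gS g + (if y then 1 else -1) = - int b" using inv by (auto simp: Inv_def split: if_splits)
      note f = gupd_dn[OF i c dn]
      show ?thesis using W1_reset[OF f(1,2)] True unfolding f F_def S_def e by simp
    next
      case mid
      note f = gupd_mid[OF i c mid]
      show ?thesis using True i unfolding W1g_def F_def S_def f by simp
    qed
  qed
  define m where "m = nat (S + int b)"
  have h: "1 \<le> S + int b" using inv by (simp add: Inv_def S_def)
  have m1: "m \<ge> 1" using nat_mono[OF h] by (simp add: m_def)
  have e1: "nat (S + -1 + int b) = m - 1" and e2: "nat (S + 1 + int b) = Suc m"
    using h by (simp_all add: m_def)
  have "p * W1g (gupd n k a b x g (\<not> x ! gi g)) + (1 - p) * W1g (gupd n k a b x g (x ! gi g))
      \<le> p * F (S + -1) + (1 - p) * F (S + 1)"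
    using le[of True] le[of False] True p0 p12 by (intro add_mono mult_left_mono) auto
  also have "\<dots> = real (gfn1 g) + r ^ b * real (k - go g - 1) + (p * r ^ (m - 1) + (1 - p) * r ^ Suc m)"
    unfolding F_def e1 e2 by (simp add: algebra_simps)
  also have "\<dots> = F S" unfolding F_def using r_id[OF m1] by (simp add: m_def)
  also have "\<dots> = W1g g" using i True unfolding F_def W1g_def S_def by simp
  finally show ?thesis .
qed

end

context thr begin

lemma Z_lt: "i < n \<Longrightarrow> Z i + 1 \<le> n"
proof -
  assume "i < n"
  have "Z i \<le> card {Suc i..<n}" unfolding Z_def by (intro card_mono) auto
  then show ?thesis using \<open>i < n\<close> by simp
qed

definition Phi :: "hist \<Rightarrow> real" where "Phi h = Phig (gst n k a b x h)"
definition Wf :: "hist \<Rightarrow> real" where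
  "Wf h = (if TH k x then W1g (gst n k a b x h) else W0g (gst n k a b x h))"

lemma inv_h: "Inv n k a b x (gst n k a b x h)" using Inv_gst a1 b1 by simp

lemma aact_Inl: "aact n k a b h = Inl i \<Longrightarrow> i = gi (gst n k a b x h) \<and> gi (gst n k a b x h) < n \<and> gc (gst n k a b x h) < k"
  unfolding aact_def gst_proj[of n k a b h x] by (auto split: if_splits)

lemma aact_Inr: "aact n k a b h = Inr bb \<Longrightarrow>
   (bb \<and> k \<le> gc (gst n k a b x h)) \<or> (\<not> bb \<and> gc (gst n k a b x h) < k \<and> n \<le> gi (gst n k a b x h))"
  unfolding aact_def gst_proj[of n k a b h x] by (auto split: if_splits)

lemma m_card: "length (filter id x) = card {j. j < n \<and> x ! j}"
  using length_filter_conv_card[of id x] lx by simp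

lemma Phi_nn: "0 \<le> Phi h" unfolding Phi_def by (rule Phig_nonneg[OF inv_h])

lemma Wf_nn: "0 \<le> Wf h" unfolding Wf_def using W0g_nonneg W1g_nonneg by simp

lemma Phi_dr: "aact n k a b h = Inl i \<Longrightarrow>
   p * (Phi (h @ [(i, \<not> x!i)]) + 1) + (1-p) * (Phi (h@[(i, x!i)]) + 1) \<le> Phi h"
  using Phi_drift[OF inv_h, of h] aact_Inl[of h i] unfolding Phi_def by (auto simp: gst_snoc)

lemma Wf_dr: "aact n k a b h = Inl i \<Longrightarrow>
   p * Wf (h @ [(i, \<not> x!i)]) + (1-p) * Wf (h@[(i, x!i)]) \<le> Wf h"
  using W0_drift[OF inv_h, of h] W1_drift[OF inv_h, of h] aact_Inl[of h i] unfolding Wf_def by (auto simp: gst_snoc)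

lemma Wf_bad: assumes "aact n k a b h = Inr bb" "bb \<noteq> TH k x" shows "1 \<le> Wf h"
proof -
  define g where "g = gst n k a b x h"
  have inv: "Inv n k a b x g" using inv_h g_def by simp
  define m where "m = card {j. j < n \<and> x ! j}"
  have om: "go g \<le> m"
  proof -
    have "go g = card {j. j < gi g \<and> x ! j}" using inv by (simp add: Inv_def)
    also have "\<dots> \<le> m" unfolding m_def using inv by (intro card_mono) (auto simp: Inv_def)
    finally show ?thesis .
  qed
  show ?thesis
  proof (cases "TH k x")
    case False
    then have mk: "m < k" unfolding TH_def m_card m_def by simp
    have "bb" "k \<le> gc g" using aact_Inr[OF assms(1)] assms(2) False g_def by auto
    then have "gfq g \<ge> 1" using inv om mk by (auto simp: Inv_def)
    moreover have "0 \<le> r ^ a * real (Z (gi g))" "0 \<le> r ^ nat (int a - gS g)" using r_nonneg by simp_all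
    ultimately have "1 \<le> W0g g" unfolding W0g_def by auto
    then show ?thesis using False by (simp add: Wf_def g_def)
  next
    case True
    then have mk: "k \<le> m" unfolding TH_def m_card m_def by simp
    have "\<not> bb" "gc g < k" "n \<le> gi g" using aact_Inr[OF assms(1)] assms(2) True g_def by auto
    then have "gi g = n" using inv by (auto simp: Inv_def)
    then have "go g = m" using inv by (simp add: Inv_def m_def)
    then have "gfn1 g \<ge> 1" using inv mk \<open>gc g < k\<close> by (auto simp: Inv_def)
    moreover have "0 \<le> r ^ b * real (k - go g)" "0 \<le> r ^ b * real (k - go g - 1)" "0 \<le> r ^ nat (gS g + int b)"
      using r_nonneg by simp_all
    ultimately have "1 \<le> W1g g" unfolding W1g_def by auto
    then show ?thesis using True by (simp add: Wf_def g_def)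
  qed
qed

lemma Phi0: "Phi [] \<le> real b / mu * real n + real k * beta"
proof -
  have g: "gst n k a b x [] = g0" by (simp add: gst_def)
  show ?thesis
  proof (cases "n = 0 \<or> k = 0")
    case True
    then show ?thesis using mu_pos beta_pos by (auto simp: Phi_def g Phig_def g0_def)
  next
    case False
    have z0: "real a / mu - beta * (1 - r ^ b) = 0" using beta_eq by linarith
    have P: "Phi [] = real b / mu * Z 0 + real k * beta + (if x ! 0 then real a / mu - beta * (1 - r ^ b) else real b / mu)"
      using False unfolding Phi_def g Phig_def FPhi_def g0_def by simp
    have Zl: "real (Z 0) + 1 \<le> real n" using Z_lt[of 0] False by linarith
    have bm: "real b / mu \<ge> 0" using mu_pos by simp
    have "real b / mu * Z 0 + (if x ! 0 then 0 else real b / mu) \<le> real b / mu * (Z 0 + 1)"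
      using bm by (auto simp: algebra_simps)
    also have "\<dots> \<le> real b / mu * real n" using Zl bm by (intro mult_left_mono) auto
    finally show ?thesis using P z0 by (auto simp: split: if_splits)
  qed
qed

lemma Wf0: "Wf [] \<le> (if TH k x then r ^ b * real k else r ^ a * real n)"
proof -
  have g: "gst n k a b x [] = g0" by (simp add: gst_def)
  have w1: "W1g g0 = r ^ b * real k"
    by (auto simp: W1g_def g0_def algebra_simps)
  have w0: "W0g g0 \<le> r ^ a * real n"
  proof (cases "n = 0")
    case True
    then show ?thesis unfolding W0g_def g0_def using Z_end[of 0] by simp
  next
    case False
    have Zl: "real (Z 0) + 1 \<le> real n" using Z_lt[of 0] False by linarith
    have "W0g g0 \<le> r ^ a * (Z 0 + 1)" using r_nonneg by (simp add: W0g_def g0_def algebra_simps)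
    also have "\<dots> \<le> r ^ a * real n" using Zl r_nonneg by (intro mult_left_mono) auto
    finally show ?thesis .
  qed
  show ?thesis using w0 w1 by (simp add: Wf_def g)
qed

theorem thr_main:
  "error_prob (detA (aact n k a b)) p k x \<le> (if TH k x then r ^ b * real k else r ^ a * real n)"
  "expected_queries (detA (aact n k a b)) p x \<le> ennreal (real b / mu * real n + real k * beta)"
proof -
  have pp: "0 \<le> p" "p \<le> 1" using p0 p12 by auto
  have "error_prob (detA (aact n k a b)) p k x \<le> Wf []"
    by (rule err_lemma[OF pp Wf_nn Wf_dr Wf_bad Phi_nn Phi_dr])
  then show "error_prob (detA (aact n k a b)) p k x \<le> (if TH k x then r ^ b * real k else r ^ a * real n)"
    using Wf0 by linarith
  have "expected_queries (detA (aact n k a b)) p x \<le> ennreal (Phi [])"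
    by (rule time_lemma[OF pp Phi_nn Phi_dr])
  also have "\<dots> \<le> ennreal (real b / mu * real n + real k * beta)"
    using Phi0 by (intro ennreal_leI)
  finally show "expected_queries (detA (aact n k a b)) p x \<le> ennreal (real b / mu * real n + real k * beta)" .
qed

end

lemma klog:
  fixes n k L :: real
  assumes n: "n \<ge> 1" and k: "k \<ge> 1" and L1: "L \<ge> 1" and Lk: "L \<ge> ln k"
  shows "k * ln n / (n * L) \<le> 2 * (k / n) + ln n / sqrt n"
proof -
  have lnn: "ln n \<ge> 0" using n by simp
  have sq: "sqrt n * sqrt n = n" using n by simp
  have sqp: "sqrt n > 0" using n by simp
  show ?thesis
  proof (cases "k \<le> sqrt n")
    case True
    have "k * ln n / (n * L) \<le> k * ln n / n"
      using n L1 lnn k by (intro divide_left_mono) (auto intro: mult_nonneg_nonneg)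
    also have "\<dots> \<le> sqrt n * ln n / n" using True lnn n by (intro divide_right_mono mult_right_mono) auto
    also have "\<dots> = ln n / sqrt n" using sq sqp by (metis nonzero_mult_div_cancel_left times_divide_eq_right
          divide_divide_eq_left less_irrefl mult.commute)
    finally show ?thesis using k n by (simp add: add_increasing)
  next
    case False
    then have "ln (sqrt n) \<le> ln k" using sqp k by (subst ln_le_cancel_iff) auto
    then have "ln n \<le> 2 * ln k" using n by (simp add: ln_sqrt)
    then have l2: "ln n \<le> 2 * L" using Lk by linarith
    have "k * ln n / (n * L) \<le> k * (2 * L) / (n * L)"
      using l2 k n L1 by (intro divide_right_mono mult_left_mono) auto
    also have "\<dots> = 2 * (k / n)" using L1 by (simp add: field_simps)
    finally show ?thesis using lnn sqp by (simp add: add_increasing2)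
  qed
qed

lemma eps_point:
  fixes n k a b lam \<delta> rb :: real
  assumes lam: "lam > 0" and n: "n \<ge> 1" and k: "k \<ge> 1" and d: "0 < \<delta>" "\<delta> < 1/2"
    and L1: "ln (k / \<delta>) \<ge> 1"
    and bl: "ln (k / \<delta>) / lam \<le> b" and bu: "b \<le> ln (k / \<delta>) / lam + 1"
    and au: "a \<le> ln (n / \<delta>) / lam + 1" and a0: "0 \<le> a"
    and rb: "0 \<le> rb" "rb \<le> \<delta>"
  shows "0 \<le> b * lam / ln (k / \<delta>) + k * a * lam / ((1 - rb) * n * ln (k / \<delta>)) - 1"
    and "b * lam / ln (k / \<delta>) + k * a * lam / ((1 - rb) * n * ln (k / \<delta>)) - 1
         \<le> lam / ln (k / \<delta>) + 6 * (k / n) + 2 * (ln n / sqrt n) + 2 * lam * (k / n)"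
proof -
  define L where "L = ln (k / \<delta>)"
  have Lpos: "L > 0" using L1 L_def by simp
  have Ld: "L = ln k - ln \<delta>" using k d by (simp add: L_def ln_div)
  have lnk: "ln k \<ge> 0" using k by simp
  have T1l: "1 \<le> b * lam / L"
  proof -
    have "L \<le> b * lam" using bl lam by (simp add: L_def pos_divide_le_eq)
    then show ?thesis using Lpos by simp
  qed
  have T1u: "b * lam / L \<le> 1 + lam / L"
  proof -
    have "b * lam \<le> L + lam" using bu lam by (simp add: L_def pos_le_divide_eq field_simps)
    then have "b * lam / L \<le> (L + lam) / L" using Lpos by (intro divide_right_mono) auto
    also have "\<dots> = 1 + lam / L" using Lpos by (simp add: field_simps)
    finally show ?thesis .
  qed
  have T2l: "0 \<le> k * a * lam / ((1 - rb) * n * L)"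
    using k a0 lam rb d n Lpos by (intro divide_nonneg_pos mult_nonneg_nonneg) auto
  have alam: "a * lam \<le> ln n - ln \<delta> + lam"
  proof -
    have "a * lam \<le> (ln (n / \<delta>) / lam + 1) * lam" using au lam by (intro mult_right_mono) auto
    also have "\<dots> = ln (n / \<delta>) + lam" using lam by (simp add: field_simps)
    also have "ln (n / \<delta>) = ln n - ln \<delta>" using n d by (simp add: ln_div)
    finally show ?thesis .
  qed
  have rb2: "1 / (1 - rb) \<le> 2" using rb d by (simp add: field_simps)
  have "k * a * lam / ((1 - rb) * n * L) = (1 / (1 - rb)) * (k * (a * lam) / (n * L))"
    by (simp add: field_simps)
  also have "\<dots> \<le> 2 * (k * (a * lam) / (n * L))"
    using rb2 k a0 lam n Lpos by (intro mult_right_mono divide_nonneg_pos mult_nonneg_nonneg) auto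
  also have "k * (a * lam) / (n * L) \<le> k * (ln n - ln \<delta> + lam) / (n * L)"
    using alam k n Lpos by (intro divide_right_mono mult_left_mono) auto
  also have "k * (ln n - ln \<delta> + lam) / (n * L) = k * ln n / (n * L) + (k / n) * (- ln \<delta> / L) + (k / n) * (lam / L)"
    using n Lpos by (simp add: field_simps)
  also have "\<dots> \<le> (2 * (k / n) + ln n / sqrt n) + (k / n) * 1 + (k / n) * lam"
  proof (intro add_mono mult_left_mono)
    show "k * ln n / (n * L) \<le> 2 * (k / n) + ln n / sqrt n"
      using klog[OF n k, of L] L1 Ld lnk d unfolding L_def by (simp add: L_def[symmetric]) 
    have h: "- ln \<delta> \<le> L" using Ld lnk by linarith
    show "- ln \<delta> / L \<le> 1" using Lpos h by (subst pos_divide_le_eq) auto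
    show "lam / L \<le> lam" using lam L1 L_def by (simp add: divide_le_eq)
  qed (use k n in auto)
  finally have T2u: "k * a * lam / ((1 - rb) * n * L) \<le> 2 * ((2 * (k / n) + ln n / sqrt n) + (k / n) * 1 + (k / n) * lam)"
    by simp
  show "0 \<le> b * lam / ln (k / \<delta>) + k * a * lam / ((1 - rb) * n * ln (k / \<delta>)) - 1"
    using T1l T2l unfolding L_def by simp
  show "b * lam / ln (k / \<delta>) + k * a * lam / ((1 - rb) * n * ln (k / \<delta>)) - 1
         \<le> lam / ln (k / \<delta>) + 6 * (k / n) + 2 * (ln n / sqrt n) + 2 * lam * (k / n)"
    using T1u T2u unfolding L_def by (simp add: algebra_simps)
qed

lemma L_top:
  fixes k :: "nat \<Rightarrow> nat" and \<delta> :: "nat \<Rightarrow> real"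
  assumes k1: "\<forall>n. 1 \<le> k n" and dpos: "\<forall>n. 0 < \<delta> n" and d0: "\<delta> \<longlonglongrightarrow> 0"
  shows "filterlim (\<lambda>n. ln (real (k n) / \<delta> n)) at_top sequentially"
proof -
  have dr: "filterlim \<delta> (at_right 0) sequentially"
    using dpos by (intro tendsto_imp_filterlim_at_right[OF d0]) auto
  have "filterlim (\<lambda>n. ln (\<delta> n)) at_bot sequentially"
    by (rule filterlim_compose[OF ln_at_0 dr])
  then have m: "filterlim (\<lambda>n. - ln (\<delta> n)) at_top sequentially"
    by (simp add: filterlim_uminus_at_bot)
  have "- ln (\<delta> n) \<le> ln (real (k n) / \<delta> n)" for n
  proof -
    have "ln (real (k n) / \<delta> n) = ln (real (k n)) - ln (\<delta> n)"
    proof -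
      have "real (k n) > 0" "\<delta> n > 0" using k1 dpos by (auto simp: Suc_le_eq)
      then show ?thesis by (simp add: ln_div)
    qed
    moreover have "ln (real (k n)) \<ge> 0" using k1 by simp
    ultimately show ?thesis by linarith
  qed
  then show ?thesis by (intro filterlim_at_top_mono[OF m]) auto
qed

lemma g_tendsto:
  fixes k :: "nat \<Rightarrow> nat" and \<delta> :: "nat \<Rightarrow> real" and lam :: real
  assumes k1: "\<forall>n. 1 \<le> k n" and kn: "(\<lambda>n. real (k n) / real n) \<longlonglongrightarrow> 0"
    and dpos: "\<forall>n. 0 < \<delta> n" and d0: "\<delta> \<longlonglongrightarrow> 0"
  shows "(\<lambda>n. lam / ln (real (k n) / \<delta> n) + 6 * (real (k n) / real n) + 2 * (ln (real n) / sqrt (real n))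
      + 2 * lam * (real (k n) / real n)) \<longlonglongrightarrow> 0"
proof -
  have t1: "(\<lambda>n. lam / ln (real (k n) / \<delta> n)) \<longlonglongrightarrow> 0"
    using tendsto_mult[OF tendsto_const[of lam] tendsto_inverse_0_at_top[OF L_top[OF k1 dpos d0]]]
    by (simp add: divide_inverse)
  have t3: "(\<lambda>n. ln (real n) / sqrt (real n)) \<longlonglongrightarrow> 0"
    using lim_ln_over_power[of "1/2"] by (simp add: powr_half_sqrt)
  have "(\<lambda>n. lam / ln (real (k n) / \<delta> n) + 6 * (real (k n) / real n) + 2 * (ln (real n) / sqrt (real n))
      + 2 * lam * (real (k n) / real n)) \<longlonglongrightarrow> 0 + 6 * 0 + 2 * 0 + 2 * lam * 0"
    by (intro tendsto_intros t1 t3 kn)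
  then show ?thesis by simp
qed

lemma ceil_facts:
  fixes y :: real assumes "y > 0"
  shows "real (nat \<lceil>y\<rceil>) \<ge> y" "real (nat \<lceil>y\<rceil>) \<le> y + 1" "nat \<lceil>y\<rceil> \<ge> 1"
proof -
  have h: "y \<le> of_int \<lceil>y\<rceil>" by (rule le_of_int_ceiling)
  then have "(0::real) < of_int \<lceil>y\<rceil>" using assms by linarith
  then have "0 < \<lceil>y\<rceil>" by simp
  then have c0: "\<lceil>y\<rceil> \<ge> 1" by simp
  then have e: "real (nat \<lceil>y\<rceil>) = of_int \<lceil>y\<rceil>" by simp
  show "real (nat \<lceil>y\<rceil>) \<ge> y" unfolding e by simp
  show "real (nat \<lceil>y\<rceil>) \<le> y + 1" unfolding e by simp
  show "nat \<lceil>y\<rceil> \<ge> 1" using c0 by arith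
qed

lemma pow_exp_bound:
  fixes p lam c :: real and m :: nat
  assumes p: "0 < p" "p < 1/2" and lam: "lam = ln ((1 - p) / p)" and c: "c > 0"
    and m: "real m \<ge> ln c / lam" and lampos: "lam > 0"
  shows "(p / (1 - p)) ^ m \<le> 1 / c"
proof -
  have r: "p / (1 - p) = exp (- lam)"
    using p by (simp add: lam exp_minus)
  have "(p / (1 - p)) ^ m = exp (real m * (- lam))"
    unfolding r by (subst exp_of_nat_mult) simp
  also have "\<dots> \<le> exp (- ln c)"
  proof -
    have "ln c \<le> real m * lam" using m lampos by (simp add: pos_divide_le_eq)
    then show ?thesis by simp
  qed
  also have "\<dots> = 1 / c" using c by (simp add: exp_minus inverse_eq_divide)
  finally show ?thesis .
qed

theorem theorem2:
  fixes p :: real and k :: "nat \<Rightarrow> nat" and \<delta> :: "nat \<Rightarrow> real"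
  assumes "0 < p" and "p < 1/2"
    and "\<forall>n. 1 \<le> k n" and "(\<lambda>n. real (k n) / real n) \<longlonglongrightarrow> 0"
    and "\<forall>n. 0 < \<delta> n" and "\<delta> \<longlonglongrightarrow> 0"
  shows "\<exists>\<epsilon> :: nat \<Rightarrow> real. \<epsilon> \<longlonglongrightarrow> 0 \<and>
    (\<forall>\<^sub>F n in sequentially. \<exists>A. valid_alg n A \<and>
       (\<forall>x. length x = n \<longrightarrow>
          error_prob A p (k n) x \<le> \<delta> n \<and>
          expected_queries A p x \<le>
            ennreal ((1 + \<epsilon> n) * real n * ln (real (k n) / \<delta> n) / KL_p p)))"
proof -
  note p0 = assms(1) and p12 = assms(2) and k1 = assms(3) and kn = assms(4) and dpos = assms(5) and d0 = assms(6)
  define lam where "lam = ln ((1 - p) / p)"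
  define mu where "mu = 1 - 2 * p"
  define r where "r = p / (1 - p)"
  define L where "L n = ln (real (k n) / \<delta> n)" for n
  define aa where "aa n = nat \<lceil>ln (real n / \<delta> n) / lam\<rceil>" for n
  define bb where "bb n = nat \<lceil>L n / lam\<rceil>" for n
  define B where "B n = real (bb n) / mu * real n + real (k n) * (real (aa n) / (mu * (1 - r ^ bb n)))" for n
  define \<epsilon> where "\<epsilon> n = B n * KL_p p / (real n * L n) - 1" for n
  have lampos: "lam > 0" using p0 p12 by (simp add: lam_def)
  have mupos: "mu > 0" using p12 by (simp add: mu_def)
  have KL: "KL_p p = mu * lam" by (simp add: KL_p_def mu_def lam_def)
  have rpos: "r > 0" using p0 p12 by (simp add: r_def)
  have E: "\<forall>\<^sub>F n in sequentially. \<delta> n < 1/2 \<and> 1 \<le> n \<and> 1 \<le> L n"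
  proof -
    have e1: "\<forall>\<^sub>F n in sequentially. \<delta> n < 1/2" using order_tendstoD(2)[OF d0, of "1/2"] by simp
    have e2: "\<forall>\<^sub>F n in sequentially. 1 \<le> n" by (rule eventually_ge_at_top)
    have e3: "\<forall>\<^sub>F n in sequentially. 1 \<le> L n"
      using L_top[OF k1 dpos d0] unfolding L_def filterlim_at_top by blast
    show ?thesis using e1 e2 e3 by eventually_elim auto
  qed
  have pt: "(\<forall>x. length x = n \<longrightarrow> error_prob (detA (aact n (k n) (aa n) (bb n))) p (k n) x \<le> \<delta> n \<and>
          expected_queries (detA (aact n (k n) (aa n) (bb n))) p x \<le> ennreal (B n))
        \<and> 0 \<le> \<epsilon> n \<and> \<epsilon> n \<le> lam / L n + 6 * (real (k n) / real n) + 2 * (ln (real n) / sqrt (real n))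
      + 2 * lam * (real (k n) / real n)
        \<and> B n = (1 + \<epsilon> n) * real n * L n / KL_p p"
    if n: "\<delta> n < 1/2" "1 \<le> n" "1 \<le> L n" for n
  proof -
    have dn: "0 < \<delta> n" using dpos by simp
    have kpos: "real (k n) \<ge> 1" using k1 by simp
    have nd: "ln (real n / \<delta> n) > 0"
    proof -
      have "real n / \<delta> n > 1" using n dn by (simp add: field_simps)
      then show ?thesis by simp
    qed
    have Lpos: "L n > 0" using n by simp
    note ca = ceil_facts[of "ln (real n / \<delta> n) / lam", folded aa_def]
    note cb = ceil_facts[of "L n / lam", folded bb_def]
    have ca': "real (aa n) \<ge> ln (real n / \<delta> n) / lam" "real (aa n) \<le> ln (real n / \<delta> n) / lam + 1" "aa n \<ge> 1"
      using ca nd lampos by (auto simp: aa_def)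
    have cb': "real (bb n) \<ge> L n / lam" "real (bb n) \<le> L n / lam + 1" "bb n \<ge> 1"
      using cb Lpos lampos by (auto simp: bb_def)
    have rb: "r ^ bb n \<le> \<delta> n / real (k n)"
      using pow_exp_bound[OF p0 p12 lam_def _ _ lampos, of "real (k n) / \<delta> n" "bb n"] cb'(1) dn kpos
      by (simp add: r_def L_def)
    have ra: "r ^ aa n \<le> \<delta> n / real n"
      using pow_exp_bound[OF p0 p12 lam_def _ _ lampos, of "real n / \<delta> n" "aa n"] ca'(1) dn n
      by (simp add: r_def)
    have rbd: "r ^ bb n \<le> \<delta> n"
    proof -
      have "\<delta> n / real (k n) \<le> \<delta> n" using kpos dn by (simp add: divide_le_eq)
      then show ?thesis using rb by linarith
    qed
    have rb0: "0 \<le> r ^ bb n" using rpos by simp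
    have rb1: "r ^ bb n < 1" using rbd n by linarith
    have epsform: "\<epsilon> n = real (bb n) * lam / ln (real (k n) / \<delta> n)
        + real (k n) * real (aa n) * lam / ((1 - r ^ bb n) * real n * ln (real (k n) / \<delta> n)) - 1"
      unfolding \<epsilon>_def B_def KL L_def[symmetric] using mupos Lpos n(2) rb1 lampos
      by (simp add: field_simps)
    note ep = eps_point[OF lampos _ kpos dn n(1) _ _ _ _ _ rb0 rbd, of "real n" "real (bb n)" "real (aa n)"]
    have e1: "0 \<le> \<epsilon> n" and e2: "\<epsilon> n \<le> lam / L n + 6 * (real (k n) / real n) + 2 * (ln (real n) / sqrt (real n))
      + 2 * lam * (real (k n) / real n)"
      using ep n ca' cb' unfolding epsform L_def by auto
    have Beq: "B n = (1 + \<epsilon> n) * real n * L n / KL_p p"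
      unfolding \<epsilon>_def KL using mupos lampos Lpos n(2) by (simp add: field_simps)
    have alg: "error_prob (detA (aact n (k n) (aa n) (bb n))) p (k n) x \<le> \<delta> n \<and>
          expected_queries (detA (aact n (k n) (aa n) (bb n))) p x \<le> ennreal (B n)"
      if x: "length x = n" for x
    proof -
      have loc: "thr n (aa n) (bb n) p x"
        using ca'(3) cb'(3) p0 p12 x by unfold_locales auto
      note M = thr.thr_main[OF loc, where k="k n"]
      have rr: "thr.r p = r" by (simp add: thr.r_def[OF loc] r_def)
      have mm: "thr.mu p = mu" by (simp add: thr.mu_def[OF loc] mu_def)
      have bt: "thr.beta (aa n) (bb n) p = real (aa n) / (mu * (1 - r ^ bb n))"
        by (simp add: thr.beta_def[OF loc] rr mm)
      have err: "(if TH (k n) x then r ^ bb n * real (k n) else r ^ aa n * real n) \<le> \<delta> n"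
        using rb ra kpos n(2) by (auto simp: pos_le_divide_eq mult.commute)
      show ?thesis
      proof
        show "error_prob (detA (aact n (k n) (aa n) (bb n))) p (k n) x \<le> \<delta> n"
          by (rule order_trans[OF M(1)[unfolded rr] err])
        show "expected_queries (detA (aact n (k n) (aa n) (bb n))) p x \<le> ennreal (B n)"
          using M(2) unfolding rr mm bt B_def .
      qed
    qed
    show ?thesis using alg e1 e2 Beq by blast
  qed
  show ?thesis
  proof (intro exI conjI)
    show "\<epsilon> \<longlonglongrightarrow> 0"
    proof (rule Lim_null_comparison[OF _ g_tendsto[OF k1 kn dpos d0, of lam]])
      show "\<forall>\<^sub>F n in sequentially. norm (\<epsilon> n) \<le> lam / ln (real (k n) / \<delta> n) + 6 * (real (k n) / real n)
          + 2 * (ln (real n) / sqrt (real n)) + 2 * lam * (real (k n) / real n)"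
        using E by eventually_elim (use pt L_def in auto)
    qed
    show "\<forall>\<^sub>F n in sequentially. \<exists>A. valid_alg n A \<and>
       (\<forall>x. length x = n \<longrightarrow>
          error_prob A p (k n) x \<le> \<delta> n \<and>
          expected_queries A p x \<le>
            ennreal ((1 + \<epsilon> n) * real n * ln (real (k n) / \<delta> n) / KL_p p))"
      using E
    proof eventually_elim
      case (elim n)
      then have P: "(\<forall>x. length x = n \<longrightarrow> error_prob (detA (aact n (k n) (aa n) (bb n))) p (k n) x \<le> \<delta> n \<and>
          expected_queries (detA (aact n (k n) (aa n) (bb n))) p x \<le> ennreal (B n))"
        and Beq: "B n = (1 + \<epsilon> n) * real n * L n / KL_p p" using pt by blast+
      show ?case
        using valid_aact[of n "k n" "aa n" "bb n"] P Beq unfolding L_def by metis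
    qed
  qed
qed

end
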